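(* Let $n\geq 4$. Then the wheel $\mathcal{W}_n$ is an $\mathcal{N}$ position for Grim if and only if the path $\mathcal{P}_{n-2}$ is an $\mathcal{N}$ position for Grim.
   Context: Grim is a two-player game on a finite simple undirected graph. Any isolated vertices of the starting graph are deleted before play begins. Players alternate moves; a move consists of selecting a vertex of the current graph and deleting it together with all its incident edges, after which every vertex that has become isolated is also deleted. The player who makes the last legal move wins (a player facing the empty graph has no move and loses). A graph is an $\mathcal{N}$ position if the player about to move has a winning strategy, and a $\mathcal{P}$ position otherwise. $\mathcal{P}_m$ is the path on $m$ vertices, and the wheel $\mathcal{W}_n=\mathcal{C}_{n-1}+K_1$ is the cycle on $n-1$ vertices joined to a single extra vertex (the center) adjacent to every cycle vertex. *)

theory Defs
  imports Main
begin

type_synonym 'a graph = "'a set \<times> 'a set set"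

definition simple_graph :: "'a graph \<Rightarrow> bool" where
  "simple_graph G \<longleftrightarrow> finite (fst G) \<and>
     (\<forall>e\<in>snd G. e \<subseteq> fst G \<and> card e = 2)"

definition remove_isolated :: "'a graph \<Rightarrow> 'a graph" where
  "remove_isolated G = ({v\<in>fst G. \<exists>e\<in>snd G. v \<in> e}, snd G)"

definition grim_move :: "'a graph \<Rightarrow> 'a \<Rightarrow> 'a graph" where
  "grim_move G v = remove_isolated (fst G - {v}, {e\<in>snd G. v \<notin> e})"

lemma card_grim_move_less:
  assumes "finite (fst G)" "v \<in> fst G"
  shows "card (fst (grim_move G v)) < card (fst G)"
proof -
  have "fst (grim_move G v) \<subseteq> fst G - {v}"
    by (auto simp: grim_move_def remove_isolated_def)
  then have "fst (grim_move G v) \<subset> fst G" using assms(2) by blast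
  then show ?thesis using assms(1) by (simp add: psubset_card_mono)
qed

text \<open>grim_N G: the player to move on the (already isolated-vertex-free)
  position G has a winning strategy (normal play: last move wins).\<close>
function grim_N :: "'a graph \<Rightarrow> bool" where
  "grim_N G = (if finite (fst G) then (\<exists>v\<in>fst G. \<not> grim_N (grim_move G v)) else False)"
  by auto
termination
  by (relation "measure (\<lambda>G. card (fst G))")
     (auto simp: card_grim_move_less)

definition N_position :: "'a graph \<Rightarrow> bool" where
  "N_position G \<longleftrightarrow> grim_N (remove_isolated G)"

definition path_graph :: "nat \<Rightarrow> nat graph" where
  "path_graph m = ({0..<m}, {{i, Suc i} | i. Suc i < m})"

text \<open>Wheel W_n = C_{n-1} + K_1: cycle on vertices 0..n-2, center n-1.\<close>
definition wheel_graph :: "nat \<Rightarrow> nat graph" where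
  "wheel_graph n = ({0..<n},
     {{i, (Suc i) mod (n - 1)} | i. i < n - 1} \<union> {{i, n - 1} | i. i < n - 1})"

end

theory Submission
  imports Defs
begin

declare grim_N.simps[simp del]

definition map_graph :: "('a \<Rightarrow> 'b) \<Rightarrow> 'a graph \<Rightarrow> 'b graph" where
  "map_graph f G = (f ` fst G, (\<lambda>e. f ` e) ` snd G)"

lemma grim_move_map:
  assumes inj: "inj_on f (fst G)" and sub: "\<forall>e\<in>snd G. e \<subseteq> fst G" and v: "v \<in> fst G"
  shows "grim_move (map_graph f G) (f v) = map_graph f (grim_move G v)"
proof -
  have key: "\<And>e. e \<in> snd G \<Longrightarrow> (f v \<in> f ` e) = (v \<in> e)"
    using inj sub v unfolding inj_on_def by blast
  have key2: "\<And>x. x \<in> fst G \<Longrightarrow> (f x = f v) = (x = v)"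
    using inj v unfolding inj_on_def by blast
  show ?thesis
    unfolding grim_move_def remove_isolated_def map_graph_def
    using key key2 sub by (auto; blast)
qed

lemma grim_N_unfold: "finite (fst G) \<Longrightarrow> grim_N G = (\<exists>v\<in>fst G. \<not> grim_N (grim_move G v))"
  by (subst grim_N.simps) simp

lemma grim_N_map:
  "inj_on f (fst G) \<Longrightarrow> \<forall>e\<in>snd G. e \<subseteq> fst G \<Longrightarrow> grim_N (map_graph f G) = grim_N G"
proof (induction G rule: grim_N.induct)
  case (1 G)
  show ?case
  proof (cases "finite (fst G)")
    case False
    then have "\<not> finite (fst (map_graph f G))" using 1(2)
      by (auto simp: map_graph_def dest: finite_imageD)
    then show ?thesis using False by (simp add: grim_N.simps[of "map_graph f G"] grim_N.simps[of G])
  next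
    case True
    have mv: "\<forall>v\<in>fst G. grim_N (grim_move (map_graph f G) (f v)) = grim_N (grim_move G v)"
    proof
      fix v assume v: "v \<in> fst G"
      have s: "fst (grim_move G v) \<subseteq> fst G" by (auto simp: grim_move_def remove_isolated_def)
      have e: "\<forall>e\<in>snd (grim_move G v). e \<subseteq> fst (grim_move G v)"
        using 1(3) by (auto simp: grim_move_def remove_isolated_def)
      show "grim_N (grim_move (map_graph f G) (f v)) = grim_N (grim_move G v)"
        using grim_move_map[OF 1(2) 1(3) v] 1(1)[OF True v inj_on_subset[OF 1(2) s] e] by simp
    qed
    have fin: "finite (fst (map_graph f G))" using True by (simp add: map_graph_def)
    have "grim_N (map_graph f G) = (\<exists>w\<in>f ` fst G. \<not> grim_N (grim_move (map_graph f G) w))"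
      using grim_N_unfold[OF fin] by (simp add: map_graph_def)
    also have "\<dots> = (\<exists>v\<in>fst G. \<not> grim_N (grim_move G v))" using mv by auto
    also have "\<dots> = grim_N G" using grim_N_unfold[OF True] by simp
    finally show ?thesis .
  qed
qed

lemma twomove: "grim_move (grim_move G u) v = remove_isolated (fst G - {u,v}, {e\<in>snd G. u\<notin>e \<and> v\<notin>e})"
  by (auto simp: grim_move_def remove_isolated_def)

lemma map_remove: "\<forall>e\<in>snd H. e \<subseteq> fst H \<Longrightarrow> map_graph g (remove_isolated H) = remove_isolated (map_graph g H)"
  unfolding map_graph_def remove_isolated_def by auto

lemma ri_cong: "\<Union>E \<subseteq> V \<Longrightarrow> \<Union>E \<subseteq> V' \<Longrightarrow> remove_isolated (V,E) = remove_isolated (V',E)"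
  unfolding remove_isolated_def by auto

lemma mod_shift_ne: "0 < k \<Longrightarrow> k < (m::nat) \<Longrightarrow> v < m \<Longrightarrow> (k + v) mod m \<noteq> v"
proof
  assume a: "0 < k" "k < m" "v < m" "(k + v) mod m = v"
  show False
  proof (cases "k + v < m")
    case True then show False using a by simp
  next
    case False
    then have "(k+v) mod m = k + v - m" using a by (simp add: le_mod_geq)
    then show False using a by simp
  qed
qed

lemma shift_inj_aux: "b \<le> a \<Longrightarrow> a < (m::nat) \<Longrightarrow> (a + k) mod m = (b + k) mod m \<Longrightarrow> a = b"
proof -
  assume h: "b \<le> a" "a < m" "(a + k) mod m = (b + k) mod m"
  then have "m dvd (a + k) - (b + k)" using mod_eq_dvd_iff_nat[of "b+k" "a+k" m] by simp
  then have d: "m dvd a - b" by simp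
  show "a = b"
  proof (rule ccontr)
    assume "a \<noteq> b"
    then have "0 < a - b" "a - b < m" using h by auto
    then show False using d nat_dvd_not_less by blast
  qed
qed

lemma inj_shift: "inj_on (\<lambda>j. (j + k) mod (m::nat)) {0..<m}"
  unfolding inj_on_def
  by (metis atLeastLessThan_iff nat_le_linear shift_inj_aux)

lemma cyc_edges:
  assumes m: "3 \<le> m" and v: "v < (m::nat)"
  shows "{e. \<exists>i<m. e = {i, Suc i mod m} \<and> v \<notin> e}
        = (\<lambda>e. (\<lambda>j. (j + Suc v) mod m) ` e) ` {{i, Suc i} | i. Suc i < m - 1}"
    (is "?L = ?R")
proof (intro equalityI subsetI)
  define g where "g = (\<lambda>j. (j + Suc v) mod m)"
  fix e assume "e \<in> ?R"
  then obtain j where j: "Suc j < m - 1" and e: "e = {g j, g (Suc j)}" unfolding g_def by auto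
  have gs: "g (Suc j) = Suc (g j) mod m" unfolding g_def by (simp add: mod_Suc_eq)
  have a: "g j \<noteq> v" unfolding g_def using mod_shift_ne[of "Suc j" m v] j v by simp
  have b: "g (Suc j) \<noteq> v" unfolding g_def using mod_shift_ne[of "Suc (Suc j)" m v] j v by simp
  have "g j < m" unfolding g_def using m by simp
  then show "e \<in> ?L" using e gs a b by auto
next
  define g where "g = (\<lambda>j. (j + Suc v) mod m)"
  fix e assume "e \<in> ?L"
  then obtain i where i: "i < m" and e: "e = {i, Suc i mod m}" and ve: "v \<notin> e" by auto
  have "\<exists>j. Suc j < m - 1 \<and> g j = i \<and> g (Suc j) = Suc i mod m"
  proof (cases "v < i")
    case True
    define j where "j = i - Suc v"
    have 1: "g j = i" unfolding g_def j_def using True i by simp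
    have 2: "g (Suc j) = Suc i mod m" unfolding g_def j_def using True
      by (simp add: Suc_diff_Suc)
    have 3: "Suc j < m - 1"
    proof (rule ccontr)
      assume "\<not> Suc j < m - 1"
      then have "i = m - 1" "v = 0" using True i unfolding j_def by auto
      then have "Suc i mod m = v" using m by simp
      then show False using ve e by simp
    qed
    show ?thesis using 1 2 3 by blast
  next
    case False
    then have iv: "i < v" using ve e by (cases "i = v") auto
    define j where "j = i + m - Suc v"
    have jj: "j + Suc v = i + m" unfolding j_def using iv v by simp
    have 1: "g j = i" unfolding g_def using jj i by simp
    have jj2: "Suc j + Suc v = Suc i + m" using jj by simp
    have 2: "g (Suc j) = Suc i mod m" unfolding g_def jj2 by (simp only: mod_add_self2)
    have "Suc i mod m = Suc i" using iv v by simp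
    then have "Suc i \<noteq> v" using ve e by auto
    then have 3: "Suc j < m - 1" unfolding j_def using iv v by simp
    show ?thesis using 1 2 3 by blast
  qed
  then obtain j where "Suc j < m - 1" "g j = i" "g (Suc j) = Suc i mod m" by blast
  then show "e \<in> ?R" unfolding g_def[symmetric] using e
    by (auto intro!: image_eqI[where x="{j, Suc j}"])
qed

theorem corollary5p7:
  fixes n :: nat
  assumes "n \<ge> 4"
  shows "N_position (wheel_graph n) \<longleftrightarrow> N_position (path_graph (n - 2))"
proof -
  obtain m where n: "n = Suc m" and m: "3 \<le> m" using assms by (cases n) auto
  define cyc where "cyc = {{i, Suc i mod m} |i. i < m}"
  define sp where "sp = {{i, m} |i. i < m}"
  define W where "W = ({0..<Suc m}, cyc \<union> sp)"
  have Wdef: "wheel_graph n = W" unfolding W_def cyc_def sp_def wheel_graph_def n by simp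
  have n2: "n - 2 = m - 1" using n by simp
  define p where "p = N_position (path_graph (m - 1))"
  have riW: "remove_isolated W = W"
  proof -
    have "\<forall>x\<in>{0..<Suc m}. \<exists>e\<in>cyc \<union> sp. x \<in> e"
    proof
      fix x assume x: "x \<in> {0..<Suc m}"
      show "\<exists>e\<in>cyc \<union> sp. x \<in> e"
      proof (cases "x < m")
        case True then have "{x,m} \<in> sp" unfolding sp_def by blast
        then show ?thesis by blast
      next
        case False then have "x = m" using x by simp
        moreover have "{0,m} \<in> sp" using m unfolding sp_def by auto
        ultimately show ?thesis by blast
      qed
    qed
    then show ?thesis unfolding remove_isolated_def W_def by auto
  qed
  have Q: "grim_N (grim_move (grim_move W m) v) = p" if v: "v < m" for v
  proof -
    define g where "g = (\<lambda>j. (j + Suc v) mod m)"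
    define PE where "PE = {{i, Suc i} | i::nat. Suc i < m - 1}"
    have pg0: "path_graph (m-1) = ({0..<m-1}, PE)" by (simp add: path_graph_def PE_def)
    have pe: "\<forall>e\<in>PE. e \<subseteq> {0..<m-1}" unfolding PE_def by auto
    have E: "{e \<in> snd W. m \<notin> e \<and> v \<notin> e} = {e. \<exists>i<m. e = {i, Suc i mod m} \<and> v \<notin> e}"
    proof -
      have "\<And>i. Suc i mod m < m" using m by simp
      then show ?thesis unfolding W_def cyc_def sp_def using m by (auto; metis less_irrefl)
    qed
    have E2: "{e. \<exists>i<m. e = {i, Suc i mod m} \<and> v \<notin> e} = (\<lambda>e. g ` e) ` PE"
      using cyc_edges[OF m v] unfolding g_def PE_def by simp
    have "grim_move (grim_move W m) v = remove_isolated ({0..<Suc m} - {m, v}, (\<lambda>e. g ` e) ` PE)"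
      unfolding twomove E E2 by (simp add: W_def)
    also have "\<dots> = remove_isolated (g ` {0..<m-1}, (\<lambda>e. g ` e) ` PE)"
    proof (rule ri_cong)
      show "\<Union> ((\<lambda>e. g ` e) ` PE) \<subseteq> {0..<Suc m} - {m, v}"
      proof -
        have ml: "\<And>i. Suc i mod m < m" using m by simp
        show ?thesis unfolding E2[symmetric] using ml by (auto simp: less_SucI; metis less_irrefl)
      qed
      show "\<Union> ((\<lambda>e. g ` e) ` PE) \<subseteq> g ` {0..<m-1}"
        unfolding PE_def by auto
    qed
    also have "\<dots> = remove_isolated (map_graph g (path_graph (m-1)))"
      unfolding map_graph_def pg0 by simp
    also have "\<dots> = map_graph g (remove_isolated (path_graph (m-1)))"
      by (rule map_remove[symmetric]) (unfold pg0, use pe in auto)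
    finally have eq: "grim_move (grim_move W m) v = map_graph g (remove_isolated (path_graph (m-1)))" .
    have "grim_N (map_graph g (remove_isolated (path_graph (m-1)))) = grim_N (remove_isolated (path_graph (m-1)))"
    proof (rule grim_N_map)
      have "fst (remove_isolated (path_graph (m-1))) \<subseteq> {0..<m}"
        unfolding pg0 remove_isolated_def using pe by auto
      then show "inj_on g (fst (remove_isolated (path_graph (m - 1))))"
        unfolding g_def by (rule inj_on_subset[OF inj_shift])
      show "\<forall>e\<in>snd (remove_isolated (path_graph (m - 1))). e \<subseteq> fst (remove_isolated (path_graph (m - 1)))"
        unfolding pg0 remove_isolated_def fst_conv snd_conv
      proof (intro ballI subsetI)
        fix e x assume a: "e \<in> PE" "x \<in> e"
        then have "x \<in> {0..<m-1}" using pe by blast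
        then show "x \<in> {x \<in> {0..<m-1}. \<exists>e\<in>PE. x \<in> e}" using a by blast
      qed
    qed
    then show ?thesis using eq by (simp add: p_def N_position_def)
  qed
  define C where "C = grim_move W m"
  have finW: "finite (fst W)" by (simp add: W_def)
  have fC: "fst C \<subseteq> {0..<m}" unfolding C_def W_def by (auto simp: grim_move_def remove_isolated_def)
  have finC: "finite (fst C)" using fC finite_subset by blast
  have c01: "{0, Suc 0} \<in> cyc" unfolding cyc_def using m by force
  have C0: "0 \<in> fst C" unfolding C_def W_def grim_move_def remove_isolated_def
    using c01 m by force
  have gC: "grim_N C = (\<not> p)"
    unfolding grim_N_unfold[OF finC] using Q fC C0 unfolding C_def by fastforce
  have F: "grim_N (grim_move W v)" if v: "v < m" and np: "\<not> p" for v
  proof -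
    define u where "u = (if v = 0 then 1 else (0::nat))"
    have "u < m" "u \<noteq> v" using m unfolding u_def by auto
    then have "{u, m} \<in> sp" unfolding sp_def by blast
    then have mF: "m \<in> fst (grim_move W v)" unfolding W_def grim_move_def remove_isolated_def
      using \<open>u \<noteq> v\<close> v by force
    have finF: "finite (fst (grim_move W v))" using finW
      by (auto simp: grim_move_def remove_isolated_def)
    have "grim_move (grim_move W v) m = grim_move (grim_move W m) v"
      unfolding twomove by (simp add: insert_commute conj_commute)
    then have "\<not> grim_N (grim_move (grim_move W v) m)" using Q[OF v] np by simp
    then show ?thesis unfolding grim_N_unfold[OF finF] using mF by blast
  qed
  have "grim_N W = p"
  proof (cases p)
    case True
    then show ?thesis unfolding grim_N_unfold[OF finW] using gC unfolding C_def
      by (auto simp: W_def)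
  next
    case False
    have "\<forall>u\<in>fst W. grim_N (grim_move W u)"
    proof
      fix u assume "u \<in> fst W"
      then have "u < m \<or> u = m" by (auto simp: W_def)
      then show "grim_N (grim_move W u)" using F[OF _ False] gC False unfolding C_def by auto
    qed
    then show ?thesis unfolding grim_N_unfold[OF finW] using False by blast
  qed
  moreover have "N_position (wheel_graph n) = grim_N W" by (simp add: N_position_def Wdef riW)
  ultimately show ?thesis using n2 p_def by simp
qed

end
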